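(* Let $a,b,c\in\mathbb{C}$ with $a\neq0$, $\Re(b)>0$, $\Re(b+a+c)>0$, $\Re(b+a-c)>0$, $\Re(b-a+c)>0$, $\Re(b-a-c)>0$, and $\frac{a+c}{b},\frac{a-c}{b}\notin\{\pm1,\pm3,\pm5,\dots\}$. Fix a square root $\sqrt{a^2-c^2}$, put $\mu=\frac{\sqrt{a^2-c^2}}{2b}$, $\tau_1=\frac12-\frac{a+c}{2b}$, $\tau_2=\frac12-\frac{a-c}{2b}$, $\tau_3=\frac12+\frac{a+c}{2b}$, $\tau_4=\frac12+\frac{a-c}{2b}$, and $Q=(b-a-c)(b+a+c)(b-a+c)(b+a-c)$. Assume $\frac12\pm\mu\notin\mathbb{Z}_0^-$ and $1+\tau_j\notin\mathbb{Z}_0^-$ ($j=1,\dots,4$). Then $$ {}_7F_6\!\left(\begin{matrix}1,\ \frac32-\mu,\ \frac32+\mu,\ \tau_1,\ \tau_2,\ \tau_3,\ \tau_4\\ \frac12-\mu,\ \frac12+\mu,\ 1+\tau_1,\ 1+\tau_2,\ 1+\tau_3,\ 1+\tau_4\end{matrix};\,1\right) =\frac{\pi Q}{4\,(ab^3-a^3b+abc^2)}\cdot\frac{\sin\!\big(\frac{a\pi}{b}\big)}{\cos\!\big(\frac{c\pi}{b}\big)+\cos\!\big(\frac{a\pi}{b}\big)}. $$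
   Context: $\mathbb{Z}_0^-=\{0,-1,-2,\dots\}$. The Pochhammer symbol is $(\lambda)_0=1$, $(\lambda)_n=\lambda(\lambda+1)\cdots(\lambda+n-1)$ for $n\ge1$. The generalized hypergeometric series is ${}_pF_q\!\left(\begin{matrix}\alpha_1,\dots,\alpha_p\\ \beta_1,\dots,\beta_q\end{matrix};z\right)=\sum_{n=0}^\infty\frac{(\alpha_1)_n\cdots(\alpha_p)_n}{(\beta_1)_n\cdots(\beta_q)_n}\frac{z^n}{n!}$ (with no $\beta_j\in\mathbb{Z}_0^-$). *)

theory Defs
  imports "HOL-Analysis.Analysis"
begin

definition hyp_term :: "complex list \<Rightarrow> complex list \<Rightarrow> complex \<Rightarrow> nat \<Rightarrow> complex" where
  "hyp_term as bs z n =
     (\<Prod>\<alpha>\<leftarrow>as. pochhammer \<alpha> n) / (\<Prod>\<beta>\<leftarrow>bs. pochhammer \<beta> n) * z ^ n / of_nat (fact n)"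

definition hypergeom :: "complex list \<Rightarrow> complex list \<Rightarrow> complex \<Rightarrow> complex" where
  "hypergeom as bs z = (\<Sum>n. hyp_term as bs z n)"

end

theory Submission
  imports Defs
begin

lemma key_alg:
  fixes u v m x z1 z2 z3 z4 :: complex
  assumes m2: "m^2 = u * v" and uv: "u+v \<noteq> 0" and m1: "1/2-m \<noteq> 0" and m2': "1/2+m \<noteq> 0"
   and zd: "z1 = 1/2 - u" "z2 = 1/2 - v" "z3 = 1/2 + u" "z4 = 1/2 + v"
   and h1: "z1 + x \<noteq> 0" and h2: "z2 + x \<noteq> 0" and h3: "z3 + x \<noteq> 0" and h4: "z4 + x \<noteq> 0"
  shows "((1/2-m)+x)/(1/2-m) * (((1/2+m)+x)/(1/2+m)) * (z1/(z1+x)) * (z2/(z2+x)) * (z3/(z3+x)) * (z4/(z4+x))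
       = z1*z2*z3*z4/(2*(u+v)*((1/2-m)*(1/2+m))) * ((1/(z1+x) - 1/(z3+x)) + (1/(z2+x) - 1/(z4+x)))"
proof -
  define D1 where "D1 = z1 + x"
  define D2 where "D2 = z2 + x"
  define D3 where "D3 = z3 + x"
  define D4 where "D4 = z4 + x"
  define N where "N = ((1/2-m)+x)*((1/2+m)+x)"
  define W where "W = (1/2-m)*(1/2+m)"
  define Z where "Z = z1*z2*z3*z4"
  have nz: "D1 \<noteq> 0" "D2 \<noteq> 0" "D3 \<noteq> 0" "D4 \<noteq> 0" "W \<noteq> 0"
    using h1 h2 h3 h4 m1 m2' by (auto simp: D1_def D2_def D3_def D4_def W_def)
  have L: "((1/2-m)+x)/(1/2-m) * (((1/2+m)+x)/(1/2+m)) * (z1/(z1+x)) * (z2/(z2+x)) * (z3/(z3+x)) * (z4/(z4+x))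
      = N/W * Z/(D1*D2*D3*D4)"
    unfolding N_def W_def Z_def D1_def D2_def D3_def D4_def by (simp add: ac_simps)
  have d3: "D3 - D1 = 2*u" and d4: "D4 - D2 = 2 * v" unfolding D1_def D2_def D3_def D4_def zd by simp_all
  have poly: "2*(u+v)*N = 2*u*(D2*D4) + 2 * v * (D1*D3)"
    unfolding N_def D1_def D2_def D3_def D4_def zd using m2 by algebra
  have S: "(1/D1 - 1/D3) + (1/D2 - 1/D4) = (2*u*(D2*D4) + 2 * v * (D1*D3))/(D1*D2*D3*D4)"
  proof -
    have a: "1/D1 - 1/D3 = (D3-D1)/(D1*D3)" "1/D2 - 1/D4 = (D4-D2)/(D2*D4)"
      using nz by (simp_all add: field_simps)
    have "(1/D1 - 1/D3) + (1/D2 - 1/D4) = 2*u/(D1*D3) + 2 * v/(D2*D4)" unfolding a d3 d4 ..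
    also have "\<dots> = (2*u*(D2*D4) + 2 * v * (D1*D3))/(D1*D2*D3*D4)"
      using nz by (simp add: field_simps)
    finally show ?thesis .
  qed
  have R: "z1*z2*z3*z4/(2*(u+v)*((1/2-m)*(1/2+m))) * ((1/(z1+x) - 1/(z3+x)) + (1/(z2+x) - 1/(z4+x)))
       = Z/(2*(u+v)*W) * ((2*(u+v)*N)/(D1*D2*D3*D4))"
    unfolding poly S[symmetric] by (simp add: Z_def W_def D1_def D2_def D3_def D4_def)
  have E: "Z/(2*(u+v)*W) * ((2*(u+v)*N)/(D1*D2*D3*D4)) = N/W * Z/(D1*D2*D3*D4)"
  proof -
    have g: "\<And>t P::complex. t \<noteq> 0 \<Longrightarrow> W \<noteq> 0 \<Longrightarrow> P \<noteq> 0 \<Longrightarrow> Z/(2*t*W) * ((2*t*N)/P) = N/W * Z/P"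
      by (simp add: field_simps)
    show ?thesis by (rule g) (use nz uv in auto)
  qed
  show ?thesis unfolding L R E ..
qed

lemma rearr0:
  fixes F PA PB r1 r2 r3 r4 A B y1 y2 y3 y4 a' b' w1 w2 w3 w4 :: complex
  assumes "F \<noteq> 0" "PA \<noteq> 0" "PB \<noteq> 0" "r1 \<noteq> 0" "r2 \<noteq> 0" "r3 \<noteq> 0" "r4 \<noteq> 0"
    "A \<noteq> 0" "B \<noteq> 0" "y1 \<noteq> 0" "y2 \<noteq> 0" "y3 \<noteq> 0" "y4 \<noteq> 0"
    "w1 \<noteq> 0" "w2 \<noteq> 0" "w3 \<noteq> 0" "w4 \<noteq> 0"
  shows "F * ((PA*a'/A) * ((PB*b'/B) * (r1 * (r2 * (r3 * r4))))) /
     ((PA * (PB * ((r1*w1/y1) * ((r2*w2/y2) * ((r3*w3/y3) * (r4*w4/y4)))))) * F)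
   = a'/A * (b'/B) * (y1/w1) * (y2/w2) * (y3/w3) * (y4/w4)"
  using assms by (simp add: field_simps)

lemma rearr:
  fixes F PA PB r1 r2 r3 r4 A B y1 y2 y3 y4 X :: complex
  assumes "F \<noteq> 0" "PA \<noteq> 0" "PB \<noteq> 0" "r1 \<noteq> 0" "r2 \<noteq> 0" "r3 \<noteq> 0" "r4 \<noteq> 0"
    "A \<noteq> 0" "B \<noteq> 0" "y1 \<noteq> 0" "y2 \<noteq> 0" "y3 \<noteq> 0" "y4 \<noteq> 0"
    "y1 + X \<noteq> 0" "y2 + X \<noteq> 0" "y3 + X \<noteq> 0" "y4 + X \<noteq> 0"
  shows "F * ((PA*(A+X)/A) * ((PB*(B+X)/B) * (r1 * (r2 * (r3 * r4))))) /
     ((PA * (PB * ((r1*(y1+X)/y1) * ((r2*(y2+X)/y2) * ((r3*(y3+X)/y3) * (r4*(y4+X)/y4)))))) * F)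
   = (A+X)/A * ((B+X)/B) * (y1/(y1+X)) * (y2/(y2+X)) * (y3/(y3+X)) * (y4/(y4+X))"
  by (rule rearr0) (use assms in auto)

lemma poch_ratio:
  fixes x :: complex assumes "x \<notin> \<int>\<^sub>\<le>\<^sub>0"
  shows "pochhammer (1 + x) n = pochhammer x n * (x + of_nat n) / x"
proof -
  have x0: "x \<noteq> 0" using assms by auto
  have "x * pochhammer (x + 1) n = (x + of_nat n) * pochhammer x n"
    using pochhammer_rec[of x n] pochhammer_rec'[of x n] by simp
  thus ?thesis using x0 by (simp add: field_simps add.commute)
qed

lemma poch_nz:
  fixes x :: complex assumes "x \<notin> \<int>\<^sub>\<le>\<^sub>0"
  shows "pochhammer x n \<noteq> 0"
  using pochhammer_eq_0_imp_nonpos_Int assms by blast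

lemma Digamma_refl:
  fixes z :: complex assumes z: "z \<notin> \<int>"
  shows "sin (of_real pi * z) * (Digamma (1 - z) - Digamma z) = of_real pi * cos (of_real pi * z)"
proof -
  have n1: "z \<notin> \<int>\<^sub>\<le>\<^sub>0" using z nonpos_Ints_subset_Ints by blast
  have "1 - z \<notin> \<int>"
  proof
    assume "1 - z \<in> \<int>" then have "1 - (1 - z) \<in> \<int>" by (intro Ints_diff) auto
    with z show False by simp
  qed
  hence n2: "1 - z \<notin> \<int>\<^sub>\<le>\<^sub>0" using nonpos_Ints_subset_Ints by blast
  have r1: "(rGamma has_field_derivative -rGamma z * Digamma z) (at z)"
    by (rule has_field_derivative_rGamma_no_nonpos_int[OF n1])
  have r2: "(rGamma has_field_derivative -rGamma (1-z) * Digamma (1-z)) (at (1-z))"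
    by (rule has_field_derivative_rGamma_no_nonpos_int[OF n2])
  have l: "((\<lambda>w::complex. 1 - w) has_field_derivative -1) (at z)"
    by (auto intro!: derivative_eq_intros)
  have r2': "((\<lambda>w. rGamma (1-w)) has_field_derivative (-rGamma (1-z) * Digamma (1-z)) * (-1)) (at z)"
    using DERIV_chain2[OF r2 l] .
  have f: "((\<lambda>w. rGamma w * rGamma (1-w)) has_field_derivative
      (-rGamma z * Digamma z) * rGamma (1-z) + rGamma z * ((-rGamma (1-z) * Digamma (1-z)) * (-1))) (at z)"
    by (rule DERIV_cong[OF DERIV_mult[OF r1 r2']]) (simp add: algebra_simps)
  have eqf: "(\<lambda>w. rGamma w * rGamma (1-w)) = (\<lambda>w::complex. sin (of_real pi * w) / of_real pi)"
    using rGamma_reflection_complex by blast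
  have g: "((\<lambda>w::complex. sin (of_real pi * w) / of_real pi) has_field_derivative cos (of_real pi * z)) (at z)"
    by (auto intro!: derivative_eq_intros)
  have "(-rGamma z * Digamma z) * rGamma (1-z) + rGamma z * ((-rGamma (1-z) * Digamma (1-z)) * (-1))
        = cos (of_real pi * z)"
    using DERIV_unique[OF f[unfolded eqf] g] .
  hence "(rGamma z * rGamma (1-z)) * (Digamma (1-z) - Digamma z) = cos (of_real pi * z)"
    by (simp add: algebra_simps)
  hence "sin (of_real pi * z) / of_real pi * (Digamma (1-z) - Digamma z) = cos (of_real pi * z)"
    by (simp add: rGamma_reflection_complex)
  thus ?thesis by (simp add: field_simps)
qed

lemma Digamma_diff_sums:
  fixes z :: complex assumes z: "z \<notin> \<int>"
  shows "(\<lambda>k. 1/(z + of_nat k) - 1/((1-z) + of_nat k)) sums (Digamma (1-z) - Digamma z)"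
proof -
  have z0: "z \<noteq> 0" using z by auto
  have z1: "1 - z \<noteq> 0" using z by auto
  have s0: "(\<lambda>k. inverse (of_nat (Suc k)) - inverse (z + of_nat k)) sums (Digamma z + euler_mascheroni)"
    using summable_sums[OF summable_Digamma[OF z0]] by (simp add: Digamma_def)
  have s1: "(\<lambda>k. inverse (of_nat (Suc k)) - inverse ((1-z) + of_nat k)) sums (Digamma (1-z) + euler_mascheroni)"
    using summable_sums[OF summable_Digamma[OF z1]] by (simp add: Digamma_def)
  from sums_diff[OF s1 s0] show ?thesis by (simp add: divide_inverse)
qed

theorem mainTheorem5:
  fixes a b c s :: complex
  assumes "a \<noteq> 0"
    and "Re b > 0" and "Re (b + a + c) > 0" and "Re (b + a - c) > 0"
    and "Re (b - a + c) > 0" and "Re (b - a - c) > 0"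
    and "\<forall>k::int. (a + c) / b \<noteq> of_int (2 * k + 1)"
    and "\<forall>k::int. (a - c) / b \<noteq> of_int (2 * k + 1)"
    and "s ^ 2 = a ^ 2 - c ^ 2"
    and "1/2 + s / (2 * b) \<notin> \<int>\<^sub>\<le>\<^sub>0"
    and "1/2 - s / (2 * b) \<notin> \<int>\<^sub>\<le>\<^sub>0"
    and "1 + (1/2 - (a + c) / (2 * b)) \<notin> \<int>\<^sub>\<le>\<^sub>0"
    and "1 + (1/2 - (a - c) / (2 * b)) \<notin> \<int>\<^sub>\<le>\<^sub>0"
    and "1 + (1/2 + (a + c) / (2 * b)) \<notin> \<int>\<^sub>\<le>\<^sub>0"
    and "1 + (1/2 + (a - c) / (2 * b)) \<notin> \<int>\<^sub>\<le>\<^sub>0"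
  shows
    "let \<mu> = s / (2 * b);
         \<tau>1 = 1/2 - (a + c) / (2 * b); \<tau>2 = 1/2 - (a - c) / (2 * b);
         \<tau>3 = 1/2 + (a + c) / (2 * b); \<tau>4 = 1/2 + (a - c) / (2 * b);
         Q = (b - a - c) * (b + a + c) * (b - a + c) * (b + a - c);
         as = [1, 3/2 - \<mu>, 3/2 + \<mu>, \<tau>1, \<tau>2, \<tau>3, \<tau>4];
         bs = [1/2 - \<mu>, 1/2 + \<mu>, 1 + \<tau>1, 1 + \<tau>2, 1 + \<tau>3, 1 + \<tau>4]
     in summable (hyp_term as bs 1) \<and>
        hypergeom as bs 1 =
          of_real pi * Q / (4 * (a * b ^ 3 - a ^ 3 * b + a * b * c ^ 2)) *
          (sin (a * of_real pi / b) / (cos (c * of_real pi / b) + cos (a * of_real pi / b)))"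
proof -
  have b0: "b \<noteq> 0" using assms(2) by auto
  define u where "u = (a + c) / (2 * b)"
  define v where "v = (a - c) / (2 * b)"
  define m where "m = s / (2 * b)"
  define z1 where "z1 = 1/2 - u"
  define z2 where "z2 = 1/2 - v"
  define z3 where "z3 = 1/2 + u"
  define z4 where "z4 = 1/2 + v"
  define Q where "Q = (b - a - c) * (b + a + c) * (b - a + c) * (b + a - c)"
  have ac: "(a + c) / b = 2 * u" "(a - c) / b = 2 * v"
    using b0 by (simp_all add: u_def v_def field_simps)
  have z1Z: "z1 \<notin> \<int>"
  proof
    assume "z1 \<in> \<int>" then obtain k where k: "z1 = of_int k" by (auto elim: Ints_cases)
    have "u = 1/2 - z1" by (simp add: z1_def)
    hence w: "u = 1/2 - of_int k" using k by simp
    have "(a + c) / b = 2 * (1/2 - of_int k)" using ac(1) w by simp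
    also have "\<dots> = of_int (2 * (-k) + 1)" by (simp add: algebra_simps)
    finally have "(a + c) / b = of_int (2 * (-k) + 1)" .
    with assms(7) show False by blast
  qed
  have z3Z: "z3 \<notin> \<int>"
  proof
    assume "z3 \<in> \<int>" then obtain k where k: "z3 = of_int k" by (auto elim: Ints_cases)
    have "u = z3 - 1/2" by (simp add: z3_def)
    hence w: "u = of_int k - 1/2" using k by simp
    have "(a + c) / b = 2 * (of_int k - 1/2)" using ac(1) w by simp
    also have "\<dots> = of_int (2 * (k - 1) + 1)" by (simp add: algebra_simps)
    finally have "(a + c) / b = of_int (2 * (k - 1) + 1)" .
    with assms(7) show False by blast
  qed
  have z2Z: "z2 \<notin> \<int>"
  proof
    assume "z2 \<in> \<int>" then obtain k where k: "z2 = of_int k" by (auto elim: Ints_cases)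
    have "v = 1/2 - z2" by (simp add: z2_def)
    hence w: "v = 1/2 - of_int k" using k by simp
    have "(a - c) / b = 2 * (1/2 - of_int k)" using ac(2) w by simp
    also have "\<dots> = of_int (2 * (-k) + 1)" by (simp add: algebra_simps)
    finally have "(a - c) / b = of_int (2 * (-k) + 1)" .
    with assms(8) show False by blast
  qed
  have z4Z: "z4 \<notin> \<int>"
  proof
    assume "z4 \<in> \<int>" then obtain k where k: "z4 = of_int k" by (auto elim: Ints_cases)
    have "v = z4 - 1/2" by (simp add: z4_def)
    hence w: "v = of_int k - 1/2" using k by simp
    have "(a - c) / b = 2 * (of_int k - 1/2)" using ac(2) w by simp
    also have "\<dots> = of_int (2 * (k - 1) + 1)" by (simp add: algebra_simps)
    finally have "(a - c) / b = of_int (2 * (k - 1) + 1)" .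
    with assms(8) show False by blast
  qed
  have zN: "z1 \<notin> \<int>\<^sub>\<le>\<^sub>0" "z2 \<notin> \<int>\<^sub>\<le>\<^sub>0" "z3 \<notin> \<int>\<^sub>\<le>\<^sub>0" "z4 \<notin> \<int>\<^sub>\<le>\<^sub>0"
    using z1Z z2Z z3Z z4Z nonpos_Ints_subset_Ints by blast+
  have z0: "z1 \<noteq> 0" "z2 \<noteq> 0" "z3 \<noteq> 0" "z4 \<noteq> 0" using zN by auto
  have mN: "1/2 - m \<notin> \<int>\<^sub>\<le>\<^sub>0" "1/2 + m \<notin> \<int>\<^sub>\<le>\<^sub>0" using assms(10,11) by (simp_all add: m_def)
  have m0: "1/2 - m \<noteq> 0" "1/2 + m \<noteq> 0" using mN zero_in_nonpos_Ints by metis+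
  have msq: "m^2 = u * v"
  proof -
    have "m^2 = s^2 / (4 * b^2)" by (simp add: m_def power_divide power_mult_distrib)
    also have "\<dots> = (a^2 - c^2) / (4 * b^2)" by (simp add: assms(9))
    also have "\<dots> = u * v" using b0 by (simp add: u_def v_def field_simps power2_eq_square)
    finally show ?thesis .
  qed
  have uv: "u + v = a / b" using b0 by (simp add: u_def v_def field_simps)
  have uv0: "u + v \<noteq> 0" using uv b0 assms(1) by simp
  define C where "C = z1*z2*z3*z4/(2*(u+v)*((1/2-m)*(1/2+m)))"
  define as where "as = [1, 3/2 - m, 3/2 + m, z1, z2, z3, z4]"
  define bs where "bs = [1/2 - m, 1/2 + m, 1 + z1, 1 + z2, 1 + z3, 1 + z4]"
  have termeq: "hyp_term as bs 1 n = C * ((1/(z1 + of_nat n) - 1/(z3 + of_nat n)) + (1/(z2 + of_nat n) - 1/(z4 + of_nat n)))"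
    for n
  proof -
    define X where "X = (of_nat n :: complex)"
    have e: "3/2 - m = 1 + (1/2 - m)" "3/2 + m = 1 + (1/2 + m)" by simp_all
    have dn: "z1 + X \<noteq> 0" "z2 + X \<noteq> 0" "z3 + X \<noteq> 0" "z4 + X \<noteq> 0"
    proof -
      have "\<And>z. z \<notin> \<int>\<^sub>\<le>\<^sub>0 \<Longrightarrow> z + X \<noteq> 0"
      proof
        fix z :: complex assume "z \<notin> \<int>\<^sub>\<le>\<^sub>0" "z + X = 0"
        then have "z = - of_nat n" by (simp add: X_def eq_neg_iff_add_eq_0)
        moreover have "- (of_nat n :: complex) \<in> \<int>\<^sub>\<le>\<^sub>0" by simp
        ultimately show False using \<open>z \<notin> \<int>\<^sub>\<le>\<^sub>0\<close> by simp
      qed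
      thus "z1 + X \<noteq> 0" "z2 + X \<noteq> 0" "z3 + X \<noteq> 0" "z4 + X \<noteq> 0" using zN by auto
    qed
    have fnz: "fact n \<noteq> (0::complex)" by simp
    have e2: "pochhammer (3/2 - m) n = pochhammer (1 + (1/2 - m)) n"
       "pochhammer (3/2 + m) n = pochhammer (1 + (1/2 + m)) n" by simp_all
    have "hyp_term as bs 1 n = fact n * (pochhammer (3/2 - m) n * (pochhammer (3/2 + m) n *
        (pochhammer z1 n * (pochhammer z2 n * (pochhammer z3 n * pochhammer z4 n))))) /
        (pochhammer (1/2 - m) n * (pochhammer (1/2 + m) n * (pochhammer (1 + z1) n *
        (pochhammer (1 + z2) n * (pochhammer (1 + z3) n * pochhammer (1 + z4) n)))) * fact n)"
      proof -
      have pf: "pochhammer (1::complex) n = fact n" by (simp add: pochhammer_fact)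
      show ?thesis unfolding hyp_term_def as_def bs_def by (simp add: pf)
    qed
    also have "\<dots> = ((1/2-m)+X)/(1/2-m) * (((1/2+m)+X)/(1/2+m)) * (z1/(z1+X)) * (z2/(z2+X)) * (z3/(z3+X)) * (z4/(z4+X))"
      unfolding e2 poch_ratio[OF mN(1)] poch_ratio[OF mN(2)] poch_ratio[OF zN(1)] poch_ratio[OF zN(2)]
         poch_ratio[OF zN(3)] poch_ratio[OF zN(4)] X_def[symmetric]
      by (rule rearr[OF fnz poch_nz[OF mN(1)] poch_nz[OF mN(2)] poch_nz[OF zN(1)] poch_nz[OF zN(2)]
          poch_nz[OF zN(3)] poch_nz[OF zN(4)] m0 z0 dn])
    also have "\<dots> = C * ((1/(z1 + X) - 1/(z3 + X)) + (1/(z2 + X) - 1/(z4 + X)))"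
      unfolding C_def by (rule key_alg[OF msq uv0 m0 z1_def z2_def z3_def z4_def dn])
    finally show ?thesis by (simp add: X_def)
  qed
  have hyp_fun: "hyp_term as bs 1 = (\<lambda>k. C * ((1/(z1 + of_nat k) - 1/(z3 + of_nat k)) + (1/(z2 + of_nat k) - 1/(z4 + of_nat k))))"
    by (rule ext) (rule termeq)
  have e13: "1 - z1 = z3" "1 - z2 = z4" by (simp_all add: z1_def z2_def z3_def z4_def)
  have s1: "(\<lambda>k. 1/(z1 + of_nat k) - 1/(z3 + of_nat k)) sums (Digamma z3 - Digamma z1)"
    using Digamma_diff_sums[OF z1Z] unfolding e13 .
  have s2: "(\<lambda>k. 1/(z2 + of_nat k) - 1/(z4 + of_nat k)) sums (Digamma z4 - Digamma z2)"
    using Digamma_diff_sums[OF z2Z] unfolding e13 .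
  have ssum: "hyp_term as bs 1 sums (C * ((Digamma z3 - Digamma z1) + (Digamma z4 - Digamma z2)))"
    unfolding hyp_fun by (intro sums_mult sums_add s1 s2)
  have sinz: "sin (of_real pi * z) \<noteq> 0" if z: "z \<notin> \<int>" for z :: complex
  proof
    assume "sin (of_real pi * z) = 0"
    then obtain n :: int where n: "of_real pi * z = of_real (of_int n * pi)" by (auto simp: sin_eq_0)
    hence "of_real pi * z = of_real pi * (of_int n :: complex)" by (simp add: mult.commute)
    hence "z = of_int n" by simp
    with z show False by simp
  qed
  have Dg1: "Digamma z3 - Digamma z1 = of_real pi * cos (of_real pi * z1) / sin (of_real pi * z1)"
    using Digamma_refl[OF z1Z] sinz[OF z1Z] unfolding e13 by (simp add: field_simps)
  have Dg2: "Digamma z4 - Digamma z2 = of_real pi * cos (of_real pi * z2) / sin (of_real pi * z2)"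
    using Digamma_refl[OF z2Z] sinz[OF z2Z] unfolding e13 by (simp add: field_simps)
  define A where "A = of_real pi * u"
  define B where "B = of_real pi * v"
  have p1: "of_real pi * z1 = of_real pi / 2 - A" by (simp add: z1_def A_def algebra_simps)
  have p2: "of_real pi * z2 = of_real pi / 2 - B" by (simp add: z2_def B_def algebra_simps)
  have sc: "sin (of_real pi * z1) = cos A" "cos (of_real pi * z1) = sin A"
           "sin (of_real pi * z2) = cos B" "cos (of_real pi * z2) = sin B"
    unfolding p1 p2 by (simp_all add: sin_diff cos_diff)
  have cA: "cos A \<noteq> 0" and cB: "cos B \<noteq> 0" using sinz[OF z1Z] sinz[OF z2Z] sc by auto
  have hval: "hypergeom as bs 1 = C * (of_real pi * sin A / cos A + of_real pi * sin B / cos B)"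
    unfolding hypergeom_def using sums_unique[OF ssum] Dg1 Dg2 sc by simp
  have aAB: "a * of_real pi / b = A + B" using b0 by (simp add: A_def B_def u_def v_def field_simps)
  have cAB: "c * of_real pi / b = A - B" using b0 by (simp add: A_def B_def u_def v_def field_simps)
  define K where "K = a * b ^ 3 - a ^ 3 * b + a * b * c ^ 2"
  have Cval: "C = Q / (2 * (4 * K))"
  proof -
    have Z: "z1*z2*z3*z4 = Q / (16 * b^4)"
      using b0 by (simp add: z1_def z2_def z3_def z4_def u_def v_def Q_def field_simps) (simp add: algebra_simps power4_eq_xxxx)
    have W: "(1/2-m)*(1/2+m) = (b^2 - a^2 + c^2) / (4 * b^2)"
    proof -
      have "(1/2-m)*(1/2+m) = 1/4 - m^2" by (simp add: algebra_simps power2_eq_square)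
      also have "\<dots> = 1/4 - u * v" by (simp add: msq)
      also have "\<dots> = (b^2 - a^2 + c^2) / (4 * b^2)"
        using b0 by (simp add: u_def v_def field_simps) (simp add: algebra_simps power2_eq_square)
      finally show ?thesis .
    qed
    have W0: "b^2 - a^2 + c^2 \<noteq> 0" using W m0 by auto
    have K: "K = a * b * (b^2 - a^2 + c^2)" by (simp add: K_def algebra_simps power2_eq_square power3_eq_cube)
    show ?thesis unfolding C_def Z W uv K using b0 W0 assms(1) by (simp add: field_simps power4_eq_xxxx power2_eq_square)
  qed
  have fin: "hypergeom as bs 1 = of_real pi * Q / (4 * K) *
          (sin (a * of_real pi / b) / (cos (c * of_real pi / b) + cos (a * of_real pi / b)))"
  proof -
    have g: "\<And>p Q K sA cA sB cB :: complex. cA \<noteq> 0 \<Longrightarrow> cB \<noteq> 0 \<Longrightarrow>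
       Q / (2 * K) * (p * sA / cA + p * sB / cB) = p * Q / K * ((sA * cB + cA * sB) / ((cA * cB + sA * sB) + (cA * cB - sA * sB)))"
      by (simp add: field_simps)
    show ?thesis unfolding hval Cval aAB cAB sin_add cos_add cos_diff
      by (rule g[OF cA cB])
  qed
  show ?thesis
    unfolding Let_def m_def[symmetric] u_def[symmetric] v_def[symmetric]
    unfolding z1_def[symmetric] z2_def[symmetric] z3_def[symmetric] z4_def[symmetric] Q_def[symmetric]
    unfolding as_def[symmetric] bs_def[symmetric] K_def[symmetric]
    using fin sums_summable[OF ssum] by simp
qed

end
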